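(* Let $0<\alpha<1$, $\sigma>0$, $N_1$ a positive integer, $h=\sigma^2\alpha^2$, $T=\sigma\alpha\sqrt{N_1}$, $\kappa=\frac\alpha{1-\alpha}$, and let $n\ge1$ be an integer. For $x\in(0,1]$ and complex $u\notin(-\infty,0]$ let $$f(u,x)=\frac{\sin(\alpha\pi)}{\alpha\pi}\frac{1}{2\sqrt u}\frac{xe^{\sqrt u-T}}{e^{\frac1\alpha(\sqrt u-T)}+x}$$ (principal branch of $\sqrt u$). Let $u^*=\frac{1+(1-2\alpha)\sqrt{4\alpha-4\alpha^2+1}}{2(1-\alpha)^2}$, $\gamma=\alpha\log\!\Big(\frac{\frac1\kappa\sqrt{u^*}+1}{\sqrt{u^*}-1}\Big)+\sqrt{u^*}$, $x^*=e^{\frac1\alpha(\gamma-T)}$, $M_0=2\max\left\{\frac{\sigma^2}{4},1+\mathrm{ceil}\!\left(\frac{9\pi^2}{\sigma^2}\right),2\,\mathrm{ceil}\!\left[\left(1+\sqrt{\pi/\sigma}\right)^4\right]\right\}$, and $\Upsilon=\{x\in[x^*,1]:(T+\alpha\log x)^2-\alpha^2\pi^2>M_0h\}$. For $x\in\Upsilon$ put $a=2\alpha\pi(T+\alpha\log x)$. Then $$\left|\int_0^{2a}\big[f(h+it,x)-f(h-it,x)\big]e^{-\frac{2n\pi}{h}t}\,\mathrm{d}t\right|=\left(\frac{e^h}{h^2}\int_0^1te^{-\frac{2n\pi}{h}t}\,\mathrm{d}t+\frac{e^{\sqrt h}}{\sqrt h}\int_1^{+\infty}\frac{e^{\sqrt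 t}}{\sqrt t}e^{-\frac{2n\pi}{h}t}\,\mathrm{d}t\right)\mathcal{O}(e^{-T})$$ uniformly for $x\in\Upsilon$, with the constant in the $\mathcal{O}$ term independent of $T$, $n$, $x$, $h$, $\alpha$ and $\sigma$.
   Context: $\mathrm{ceil}(y)$ is the least integer $\ge y$. *)

theory Defs
  imports "HOL-Analysis.Analysis"
begin

definition hA :: "real \<Rightarrow> real \<Rightarrow> real" where
  "hA \<alpha> \<sigma> = \<sigma>\<^sup>2 * \<alpha>\<^sup>2"

definition TA :: "real \<Rightarrow> real \<Rightarrow> nat \<Rightarrow> real" where
  "TA \<alpha> \<sigma> N1 = \<sigma> * \<alpha> * sqrt (real N1)"

definition kappaA :: "real \<Rightarrow> real" where
  "kappaA \<alpha> = \<alpha> / (1 - \<alpha>)"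

definition fA :: "real \<Rightarrow> real \<Rightarrow> complex \<Rightarrow> real \<Rightarrow> complex" where
  "fA \<alpha> T u x =
     complex_of_real (sin (\<alpha> * pi) / (\<alpha> * pi)) * (1 / (2 * csqrt u)) *
     (complex_of_real x * exp (csqrt u - complex_of_real T)) /
     (exp ((csqrt u - complex_of_real T) / complex_of_real \<alpha>) + complex_of_real x)"

definition ustarA :: "real \<Rightarrow> real" where
  "ustarA \<alpha> = (1 + (1 - 2*\<alpha>) * sqrt (4*\<alpha> - 4*\<alpha>\<^sup>2 + 1)) / (2 * (1 - \<alpha>)\<^sup>2)"

definition gammaA :: "real \<Rightarrow> real" where
  "gammaA \<alpha> = \<alpha> * ln (((1 / kappaA \<alpha>) * sqrt (ustarA \<alpha>) + 1) / (sqrt (ustarA \<alpha>) - 1))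
               + sqrt (ustarA \<alpha>)"

definition xstarA :: "real \<Rightarrow> real \<Rightarrow> real" where
  "xstarA \<alpha> T = exp ((1 / \<alpha>) * (gammaA \<alpha> - T))"

definition M0A :: "real \<Rightarrow> real" where
  "M0A \<sigma> = 2 * max (max (\<sigma>\<^sup>2 / 4) (1 + real_of_int (ceiling (9 * pi\<^sup>2 / \<sigma>\<^sup>2))))
                    (2 * real_of_int (ceiling ((1 + sqrt (pi / \<sigma>)) ^ 4)))"

definition UpsA :: "real \<Rightarrow> real \<Rightarrow> nat \<Rightarrow> real set" where
  "UpsA \<alpha> \<sigma> N1 = {x. xstarA \<alpha> (TA \<alpha> \<sigma> N1) \<le> x \<and> x \<le> 1 \<and>
      (TA \<alpha> \<sigma> N1 + \<alpha> * ln x)\<^sup>2 - \<alpha>\<^sup>2 * pi\<^sup>2 > M0A \<sigma> * hA \<alpha> \<sigma>}"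

end

theory Submission
  imports Defs
begin

lemma G2_int:
  fixes c :: real assumes c: "c > 0"
  shows "(\<lambda>t. exp (sqrt t) / sqrt t * exp (- c * t)) integrable_on {1..}"
proof -
  let ?g = "\<lambda>t. exp (1/(2*c)) * exp (- (c/2) * t)"
  have gi: "?g integrable_on {1..}"
  proof -
    have "(\<lambda>x. exp (-(c/2)*x)) integrable_on {1..}"
      using integrable_on_exp_minus_to_infinity[of "c/2" 1] c by simp
    from integrable_on_cmult_left[OF this, of "exp (1/(2*c))"] show ?thesis by simp
  qed
  have cont: "continuous_on {1..} (\<lambda>t. exp (sqrt t) / sqrt t * exp (- c * t))"
    by (intro continuous_intros) auto
  have bnd: "norm (exp (sqrt t) / sqrt t * exp (- c * t)) \<le> ?g t" if t: "t \<in> {1..}" for t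
  proof -
    have t1: "1 \<le> t" using t by auto
    have s1: "1 \<le> sqrt t" using t1 by auto
    have sq: "sqrt t ^ 2 = t" using t1 by simp
    have key: "sqrt t - c * t \<le> 1/(2*c) - (c/2) * t"
    proof -
      have "0 \<le> (c * sqrt t - 1)^2 / (2*c)" using c by simp
      also have "(c * sqrt t - 1)^2 / (2*c) = (c/2) * t + 1/(2*c) - sqrt t"
        using c sq by (simp add: field_simps power2_eq_square)
      finally show ?thesis by simp
    qed
    have "norm (exp (sqrt t) / sqrt t * exp (- c * t)) = exp (sqrt t) / sqrt t * exp (- c * t)"
      using s1 by simp
    also have "\<dots> \<le> exp (sqrt t) * exp (- c * t)"
    proof -
      have "exp (sqrt t) / sqrt t \<le> exp (sqrt t)" using s1 by (simp add: divide_le_eq)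
      then show ?thesis by (rule mult_right_mono) simp
    qed
    also have "\<dots> = exp (sqrt t - c * t)" by (simp add: exp_add[symmetric])
    also have "\<dots> \<le> exp (1/(2*c) - (c/2) * t)" using key by simp
    also have "\<dots> = ?g t" by (simp add: exp_add[symmetric])
    finally show ?thesis .
  qed
  have "(\<lambda>t. exp (sqrt t) / sqrt t * exp (- c * t)) absolutely_integrable_on {1..}"
    by (rule measurable_bounded_by_integrable_imp_absolutely_integrable[OF
          continuous_imp_measurable_on_sets_lebesgue[OF cont] _ gi bnd]) auto
  then show ?thesis using set_lebesgue_integral_eq_integral(1) by blast
qed

lemma csqrt_facts:
  fixes h \<tau> :: real assumes h: "h > 0"
  defines "s \<equiv> csqrt (Complex h \<tau>)"
  shows "Re s > 0" "(Re s)^2 - (Im s)^2 = h" "2 * Re s * Im s = \<tau>"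
        "2 * (Re s)^2 \<le> 2*h + \<bar>\<tau>\<bar>" "(norm s)^2 = sqrt (h^2 + \<tau>^2)"
        "h \<le> (norm s)^2" "\<bar>\<tau>\<bar> \<le> (norm s)^2"
proof -
  have sq: "s^2 = Complex h \<tau>" unfolding s_def by simp
  have e1: "(Re s)^2 - (Im s)^2 = h" using arg_cong[OF sq, of Re] by (simp add: power2_eq_square)
  have e2: "2 * Re s * Im s = \<tau>" using arg_cong[OF sq, of Im] by (simp add: power2_eq_square algebra_simps)
  have "Re s \<ge> 0" unfolding s_def by (rule Re_csqrt)
  moreover have "(Re s)^2 > 0" using e1 h by (smt (verit) zero_le_power2)
  ultimately show "Re s > 0" by (metis less_eq_real_def power2_eq_square mult_zero_left)
  show "(Re s)^2 - (Im s)^2 = h" by (fact e1)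
  show "2 * Re s * Im s = \<tau>" by (fact e2)
  have ns: "(norm s)^2 = sqrt (h^2 + \<tau>^2)"
  proof -
    have "(norm s)^2 = norm (s^2)" by (simp add: norm_power)
    also have "\<dots> = sqrt (h^2 + \<tau>^2)" using sq by (simp add: cmod_def)
    finally show ?thesis .
  qed
  show "(norm s)^2 = sqrt (h^2 + \<tau>^2)" by (fact ns)
  have n2: "(norm s)^2 = (Re s)^2 + (Im s)^2" by (simp add: cmod_power2)
  have "sqrt (h^2 + \<tau>^2) \<le> h + \<bar>\<tau>\<bar>"
  proof (intro real_le_lsqrt)
    have "h*h + \<tau>*\<tau> \<le> (h + \<bar>\<tau>\<bar>)*(h + \<bar>\<tau>\<bar>)"
      using h by (simp add: algebra_simps)
    then show "h^2 + \<tau>^2 \<le> (h + \<bar>\<tau>\<bar>)^2" by (simp add: power2_eq_square)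
  qed (use h in auto)
  then show "2 * (Re s)^2 \<le> 2*h + \<bar>\<tau>\<bar>" using ns n2 e1 by linarith
  show "h \<le> (norm s)^2" using ns h by (simp add: real_le_rsqrt)
  show "\<bar>\<tau>\<bar> \<le> (norm s)^2" using ns by (simp add: real_le_rsqrt)
qed

lemma cos_neg_bound:
  fixes \<theta> :: real assumes "cos \<theta> < 0" "\<bar>\<theta>\<bar> < 13*pi/6"
  shows "\<bar>\<theta>\<bar> < 3*pi/2"
proof (rule ccontr)
  assume "\<not> \<bar>\<theta>\<bar> < 3*pi/2"
  then have a: "3*pi/2 \<le> \<bar>\<theta>\<bar>" by simp
  have c1: "cos \<bar>\<theta>\<bar> = cos \<theta>" by (simp add: abs_if)
  have c2: "cos \<bar>\<theta>\<bar> = cos (\<bar>\<theta>\<bar> - 2*pi)" by (simp add: cos_diff)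
  have "cos (\<bar>\<theta>\<bar> - 2*pi) \<ge> 0" using a assms(2) by (intro cos_ge_zero) auto
  then show False using assms(1) c1 c2 by simp
qed

lemma geo:
  fixes \<alpha> h L \<tau> :: real
  assumes a0: "0 < \<alpha>" and h: "0 < h" and L0: "0 < L"
    and HL: "L^2 > 19*pi^2*\<alpha>^2 + 2*h" and tau: "\<bar>\<tau>\<bar> \<le> 4*\<alpha>*pi*L"
  shows "norm (1 + exp ((csqrt (Complex h \<tau>) - of_real L) / of_real \<alpha>)) \<ge> 1/2"
proof -
  define s where "s = csqrt (Complex h \<tau>)"
  define X where "X = Re s"
  define Y where "Y = Im s"
  define w where "w = (s - of_real L) / of_real \<alpha>"
  have X0: "X > 0" and XY: "X^2 - Y^2 = h" and XY2: "2*X*Y = \<tau>"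
    using csqrt_facts[OF h, of \<tau>] unfolding s_def X_def Y_def by auto
  have Rw: "Re w = (X - L)/\<alpha>" unfolding w_def X_def by simp
  have Iw: "Im w = Y/\<alpha>" unfolding w_def Y_def by simp
  have nE: "norm (exp w) = exp ((X-L)/\<alpha>)" using Rw by simp
  have RE: "Re (1 + exp w) = 1 + exp ((X-L)/\<alpha>) * cos (Y/\<alpha>)" using Rw Iw by (simp add: Re_exp)
  have ln2: "ln 2 < (1::real)" by (rule ln_2_less_1)
  have ln2p: "0 < ln (2::real)" by simp
  have "norm (1 + exp w) \<ge> 1/2"
  proof (cases "cos (Y/\<alpha>) \<ge> 0")
    case True
    have "1 \<le> Re (1 + exp w)" using RE True by simp
    also have "\<dots> \<le> norm (1 + exp w)" by (rule complex_Re_le_cmod)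
    finally show ?thesis by simp
  next
    case cneg: False
    show ?thesis
    proof (cases "(X-L)/\<alpha> \<le> - ln 2")
      case True
      have "exp ((X-L)/\<alpha>) \<le> exp (- ln 2)" using True by simp
      also have "exp (- ln 2) = (1/2::real)" by (simp add: exp_minus)
      finally have "norm (exp w) \<le> 1/2" using nE by simp
      moreover have "norm (1::complex) \<le> norm (1 + exp w) + norm (exp w)"
        by (metis add_diff_cancel_right' norm_triangle_ineq4)
      ultimately show ?thesis by simp
    next
      case False
      note F1 = False
      show ?thesis
      proof (cases "(X-L)/\<alpha> \<ge> ln 2")
        case True
        have "2 \<le> exp ((X-L)/\<alpha>)" using True by (metis exp_ln exp_le_cancel_iff zero_less_numeral)
        then have "2 \<le> norm (exp w)" using nE by simp
        moreover have "norm (exp w) \<le> norm (1 + exp w) + norm (1::complex)"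
          by (metis add_diff_cancel_left' norm_triangle_ineq4)
        ultimately show ?thesis by simp
      next
        case False
        have al: "\<alpha> * ln 2 < \<alpha>" using ln2 a0 by simp
        have A1: "X - L < \<alpha> * ln 2" using False a0 by (simp add: field_simps)
        have A2: "L - X < \<alpha> * ln 2" using F1 a0 by (simp add: field_simps)
        have r1: "\<bar>X - L\<bar> < \<alpha>" using A1 A2 al by linarith
        have "(3::real)^2 < pi^2" using pi_gt3 by (intro power_strict_mono) auto
        then have pi9: "9 < pi^2" by simp
        have a2: "0 < \<alpha>^2" using a0 by simp
        have p9: "9 * \<alpha>^2 < pi^2 * \<alpha>^2" using pi9 a2 by (intro mult_strict_right_mono) auto
        have e19: "19*pi^2*\<alpha>^2 = 19*(pi^2*\<alpha>^2)" by simp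
        have e13: "(13*\<alpha>)^2 = 169*\<alpha>^2" by (simp add: power_mult_distrib)
        have "(13*\<alpha>)^2 < L^2" unfolding e13 using HL h p9 a2 e19 by linarith
        then have L13: "13*\<alpha> < L" using L0 power_less_imp_less_base[of "13*\<alpha>" 2 L] by simp
        have Xlow: "X > 12*L/13" using r1 L13 by linarith
        have eY: "Y*(2*X) = \<tau>" using XY2 by (simp add: algebra_simps)
        have "\<bar>Y\<bar> * (2*X) = \<bar>\<tau>\<bar>" using X0 unfolding eY[symmetric] by (simp add: abs_mult)
        then have "\<bar>Y\<bar> * (2*X) \<le> 4*\<alpha>*pi*L" using tau by simp
        moreover have "4*\<alpha>*pi*L < (13*\<alpha>*pi/6) * (2*X)"
        proof -
          have "4*L < (13/6) * (2*X)" using Xlow by simp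
          then have "(\<alpha>*pi) * (4*L) < (\<alpha>*pi) * ((13/6) * (2*X))"
            using a0 pi_gt_zero by (intro mult_strict_left_mono) auto
          then show ?thesis by (simp add: algebra_simps)
        qed
        ultimately have "\<bar>Y\<bar> * (2*X) < (13*\<alpha>*pi/6) * (2*X)" by linarith
        then have "\<bar>Y\<bar> < 13*\<alpha>*pi/6" using X0 by (simp add: mult_less_cancel_right algebra_simps)
        then have th: "\<bar>Y/\<alpha>\<bar> < 13*pi/6" using a0 by (simp add: field_simps)
        have "\<bar>Y/\<alpha>\<bar> < 3*pi/2" using cos_neg_bound[OF _ th] cneg by simp
        then have Yb: "\<bar>Y\<bar> < 3*\<alpha>*pi/2" using a0 by (simp add: field_simps)
        have "\<bar>Y\<bar>^2 < (3*\<alpha>*pi/2)^2"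
          using Yb by (intro power_strict_mono) auto
        then have Y2: "Y^2 < 9/4 * (pi^2*\<alpha>^2)" by (simp add: power_mult_distrib power_divide algebra_simps)
        have X2: "(L - \<alpha>)^2 < X^2" using r1 L13 a0
          by (intro power_strict_mono) auto
        have aL: "\<alpha>*L \<le> L*L/13" using L13 L0 by (simp add: field_simps)
        have "(L-\<alpha>)^2 = L*L - 2*(\<alpha>*L) + \<alpha>^2" by (simp add: power2_eq_square algebra_simps)
        then have L11: "(L-\<alpha>)^2 \<ge> 11/13 * L^2" using aL a2 by (simp add: power2_eq_square)
        have P0: "0 \<le> pi^2*\<alpha>^2" by simp
        have HL': "L^2 > 19*(pi^2*\<alpha>^2) + 2*h" using HL by (simp add: algebra_simps)
        show ?thesis using X2 Y2 XY HL' L11 P0 h by linarith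
      qed
    qed
  qed
  then show ?thesis unfolding w_def s_def .
qed

definition Gc :: "real \<Rightarrow> real \<Rightarrow> real \<Rightarrow> complex \<Rightarrow> complex" where
  "Gc \<alpha> T L s = exp (s - of_real T) / (2 * s * (1 + exp ((s - of_real L) / of_real \<alpha>)))"

definition Gd :: "real \<Rightarrow> real \<Rightarrow> real \<Rightarrow> complex \<Rightarrow> complex" where
  "Gd \<alpha> T L s = exp (s - of_real T) *
     (1 / (2 * s * (1 + exp ((s - of_real L) / of_real \<alpha>)))
      - 1 / (2 * s^2 * (1 + exp ((s - of_real L) / of_real \<alpha>)))
      - exp ((s - of_real L) / of_real \<alpha>) /
          (2 * s * of_real \<alpha> * (1 + exp ((s - of_real L) / of_real \<alpha>))^2))"

lemma fA_eq:
  assumes x: "x > 0" and a: "\<alpha> \<noteq> 0"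
  shows "fA \<alpha> T u x = of_real (sin (\<alpha> * pi) / (\<alpha> * pi)) * Gc \<alpha> T (T + \<alpha> * ln x) (csqrt u)"
proof -
  define s where "s = csqrt u"
  define E where "E = exp ((s - of_real (T + \<alpha> * ln x)) / of_real \<alpha>)"
  have "exp ((s - of_real T) / of_real \<alpha>) = of_real x * E"
  proof -
    note False = a
    have "(s - of_real T) / of_real \<alpha> = (s - of_real (T + \<alpha> * ln x)) / of_real \<alpha> + of_real (ln x)"
      using False by (simp add: field_simps)
    then have "exp ((s - of_real T) / of_real \<alpha>) = exp ((s - of_real (T + \<alpha> * ln x)) / of_real \<alpha>) * exp (of_real (ln x))"
      by (simp add: exp_add)
    also have "exp (of_real (ln x) :: complex) = of_real x" using x by (simp add: exp_of_real)
    finally show ?thesis unfolding E_def by simp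
  qed
  then have den: "exp ((s - of_real T) / of_real \<alpha>) + of_real x = of_real x * (1 + E)"
    by (simp add: algebra_simps)
  have xn: "(of_real x :: complex) \<noteq> 0" using x by simp
  have c1: "(of_real x * exp (s - of_real T)) / (of_real x * (1 + E)) = exp (s - of_real T) / (1 + E)"
    using xn by (rule mult_divide_mult_cancel_left)
  have c2: "(1 / (2 * s)) * (exp (s - of_real T) / (1 + E)) = exp (s - of_real T) / (2 * s * (1 + E))"
    by (simp add: times_divide_times_eq)
  have "fA \<alpha> T u x = of_real (sin (\<alpha> * pi) / (\<alpha> * pi)) * ((1 / (2 * s)) *
     ((of_real x * exp (s - of_real T)) / (of_real x * (1 + E))))"
    unfolding fA_def s_def[symmetric] den by (simp only: divide_inverse mult.assoc mult_1_left mult_1_right)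
  also have "\<dots> = of_real (sin (\<alpha> * pi) / (\<alpha> * pi)) * (exp (s - of_real T) / (2 * s * (1 + E)))"
    unfolding c1 c2 ..
  finally show ?thesis unfolding Gc_def s_def[symmetric] E_def[symmetric] .
qed

lemma alg_id:
  fixes s e X a L :: complex
  assumes s: "s \<noteq> 0" and e: "1 + e \<noteq> 0" and a: "a \<noteq> 0"
  shows "(X * (1 - 0) * (2 * s * (1 + e)) - X * ((0 * s + 1 * 2) * (1 + e) + (0 + e * (((1 - 0) * a - (s - L) * 0) / (a * a))) * (2 * s))) /
         (2 * s * (1 + e) * (2 * s * (1 + e))) =
         X * (1 / (2 * s * (1 + e)) - 1 / (2 * s^2 * (1 + e)) - e / (2 * s * a * (1 + e)^2))"
proof -
  define dd where "dd = 1 + e"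
  have dd: "dd \<noteq> 0" using e unfolding dd_def .
  have LL: "(X * (1 - 0) * (2 * s * (1 + e)) - X * ((0 * s + 1 * 2) * (1 + e) + (0 + e * (((1 - 0) * a - (s - L) * 0) / (a * a))) * (2 * s))) /
         (2 * s * (1 + e) * (2 * s * (1 + e))) = X * (2 * s * dd - 2 * dd - 2 * s * e / a) / (4 * s^2 * dd^2)"
    unfolding dd_def[symmetric] by (simp add: power2_eq_square algebra_simps)
  have R: "X * (1 / (2 * s * (1 + e)) - 1 / (2 * s^2 * (1 + e)) - e / (2 * s * a * (1 + e)^2))
     = X * (2 * s * dd - 2 * dd - 2 * s * e / a) / (4 * s^2 * dd^2)"
    unfolding dd_def[symmetric] using s a dd by (simp add: field_simps power2_eq_square)
  show ?thesis using LL R by simp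
qed

lemma Gc_deriv:
  assumes s: "s \<noteq> 0" and E: "1 + exp ((s - of_real L) / of_real \<alpha>) \<noteq> 0" and a: "\<alpha> \<noteq> 0"
  shows "(Gc \<alpha> T L has_field_derivative Gd \<alpha> T L s) (at s)"
proof -
  have eq: "Gc \<alpha> T L = (\<lambda>s. exp (s - of_real T) / (2 * s * (1 + exp ((s - of_real L) / of_real \<alpha>))))"
    by (simp add: Gc_def fun_eq_iff)
  show ?thesis unfolding eq
    apply (rule derivative_eq_intros refl | (simp add: s E a; fail))+
    unfolding Gd_def by (rule alg_id[OF s E]) (use a in simp)
qed

lemma x_le_exp: "(x::real) \<le> exp x"
  using exp_ge_add_one_self[of x] by linarith

lemma real_bounds:
  fixes h X :: real assumes h: "0 < h" and X0: "0 \<le> X" and Xb: "X \<le> sqrt h + 1"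
  shows "h * exp X \<le> exp (h+4)" "sqrt h * exp X \<le> exp (h+4)" "exp (2*X) \<le> exp (h+4)"
proof -
  define y where "y = sqrt h"
  have y0: "0 \<le> y" unfolding y_def using h by simp
  have hy: "h = y^2" unfolding y_def using h by simp
  have ey: "y \<le> exp y" by (rule x_le_exp)
  have eX: "exp X \<le> exp (y+1)" using Xb unfolding y_def by simp
  show "exp (2*X) \<le> exp (h+4)"
  proof -
    have "0 \<le> (y-1)^2" by simp
    then have "2*X \<le> h + 4" using Xb hy unfolding y_def[symmetric] by (simp add: power2_eq_square algebra_simps)
    then show ?thesis by simp
  qed
  show "sqrt h * exp X \<le> exp (h+4)"
  proof -
    have "sqrt h * exp X \<le> exp y * exp (y+1)"
      unfolding y_def[symmetric] using ey eX y0 by (intro mult_mono) auto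
    also have "\<dots> = exp (2*y+1)" by (simp add: exp_add[symmetric])
    also have "\<dots> \<le> exp (h+4)"
    proof -
      have "0 \<le> (y-1)^2" by simp
      then have "2*y+1 \<le> h+4" using hy by (simp add: power2_eq_square algebra_simps)
      then show ?thesis by simp
    qed
    finally show ?thesis .
  qed
  show "h * exp X \<le> exp (h+4)"
  proof -
    have "h = y * y" using hy by (simp add: power2_eq_square)
    also have "y * y \<le> exp y * exp y" using ey y0 by (intro mult_mono) auto
    finally have "h * exp X \<le> (exp y * exp y) * exp (y+1)" using eX
      by (intro mult_mono) auto
    also have "\<dots> = exp (3*y+1)" by (simp add: exp_add[symmetric])
    also have "\<dots> \<le> exp (h+4)"
    proof -
      have "0 \<le> (y-3/2)^2" by simp
      then have "3*y+1 \<le> h+4" using hy by (simp add: power2_eq_square algebra_simps)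
      then show ?thesis by simp
    qed
    finally show ?thesis .
  qed
qed

lemma R4:
  fixes \<alpha> X L :: real assumes a0: "0 < \<alpha>" and a1: "\<alpha> \<le> 1" and L0: "0 < L" and X0: "0 \<le> X"
  shows "L * exp (X - \<bar>X - L\<bar> / \<alpha>) \<le> exp (2*X)"
proof -
  have "\<bar>X - L\<bar> \<le> \<bar>X - L\<bar> / \<alpha>" using a0 a1 by (simp add: le_divide_eq mult_left_le)
  then have "exp (X - \<bar>X - L\<bar> / \<alpha>) \<le> exp (X - \<bar>X - L\<bar>)" by simp
  then have "L * exp (X - \<bar>X - L\<bar> / \<alpha>) \<le> L * exp (X - \<bar>X - L\<bar>)" using L0 by simp
  also have "\<dots> \<le> exp (2*X)"
  proof (cases "L \<le> X + 1")
    case True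
    have "L * exp (X - \<bar>X - L\<bar>) \<le> exp X * exp X"
    proof (rule mult_mono)
      show "L \<le> exp X" using True exp_ge_add_one_self[of X] by linarith
      show "exp (X - \<bar>X - L\<bar>) \<le> exp X" by simp
    qed auto
    then show ?thesis by (simp add: exp_add[symmetric])
  next
    case False
    then have "X - \<bar>X - L\<bar> = 2*X - L" by simp
    moreover have "exp (2*X - L) = exp (-L) * exp (2*X)" by (subst exp_add[symmetric]) simp
    ultimately have "L * exp (X - \<bar>X - L\<bar>) = (L * exp (-L)) * exp (2*X)" by simp
    also have "L * exp (-L) \<le> 1" using x_le_exp[of L] by (simp add: exp_minus field_simps)
    then have "(L * exp (-L)) * exp (2*X) \<le> exp (2*X)" by (simp add: mult_left_le_one_le)
    finally show ?thesis .
  qed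
  finally show ?thesis .
qed

lemma E_ratio:
  fixes w :: complex assumes N: "norm (1 + exp w) \<ge> 1/2"
  shows "norm (exp w) / (norm (1 + exp w))^2 \<le> 16 * exp (- \<bar>Re w\<bar>)"
proof -
  define r where "r = Re w"
  have nE: "norm (exp w) = exp r" unfolding r_def by simp
  define N where "N = norm (1 + exp w)"
  have N2: "N \<ge> 1/2" using N unfolding N_def .
  have main: "exp r / N^2 \<le> 16 * exp (- \<bar>r\<bar>)"
  proof (cases "r \<le> 0")
    case True
    have "(1/2)^2 \<le> N^2" using N2 by (intro power_mono) auto
    then have "N^2 \<ge> 1/4" by (simp add: power2_eq_square)
    then have "exp r / N^2 \<le> exp r / (1/4)" using N2 by (intro divide_left_mono) auto
    also have "\<dots> \<le> 16 * exp r" by simp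
    finally show ?thesis using True by simp
  next
    case False
    have NE: "N \<ge> exp r / 4"
    proof (cases "exp r \<ge> 2")
      case True
      have "norm (exp w) \<le> N + norm (1::complex)" unfolding N_def
        by (metis add_diff_cancel_left' norm_triangle_ineq4)
      then show ?thesis using True nE by simp
    next
      case False then show ?thesis using N2 by simp
    qed
    have ep: "0 < exp r / 4" by simp
    have "(exp r / 4)^2 \<le> N^2" using NE ep by (intro power_mono) auto
    have Np: "0 < N" using N2 by simp
    then have "exp r / N^2 \<le> exp r / (exp r / 4)^2" using ep \<open>(exp r / 4)^2 \<le> N^2\<close>
      by (intro divide_left_mono) auto
    also have "\<dots> = 16 * exp (-r)" by (simp add: power2_eq_square exp_minus field_simps)
    finally show ?thesis using False by simp
  qed
  then show ?thesis unfolding N_def r_def by simp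
qed

lemma s_lower:
  fixes h n :: real assumes "0 < h" "h \<le> n^2" "0 \<le> n"
  shows "sqrt h \<le> n"
  using real_sqrt_le_mono[OF assms(2)] assms(3) by simp

lemma X_upper:
  fixes h X t :: real assumes "0 < h" "0 \<le> X" "2*X^2 \<le> 2*h + t" "0 \<le> t"
  shows "X \<le> sqrt h + 3/4 * sqrt t"
proof -
  have "X^2 \<le> (sqrt h + 3/4 * sqrt t)^2"
  proof -
    have e1: "(sqrt h)^2 = h" using assms by simp
    have e2: "(3/4 * sqrt t)^2 = 9/16 * t" using assms by (simp only: power_mult_distrib real_sqrt_pow2) (simp add: power2_eq_square)
    have "(sqrt h + 3/4 * sqrt t)^2 = (sqrt h)^2 + (3/4 * sqrt t)^2 + 2 * sqrt h * (3/4 * sqrt t)"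
      by (rule power2_sum)
    also have "\<dots> = h + 3/2 * (sqrt h * sqrt t) + 9/16 * t" unfolding e1 e2 by simp
    finally have e3: "(sqrt h + 3/4 * sqrt t)^2 = h + 3/2 * (sqrt h * sqrt t) + 9/16 * t" .
    have "0 \<le> sqrt h * sqrt t" using assms by simp
    then show ?thesis unfolding e3 using assms(3) assms(4) by linarith
  qed
  moreover have "0 \<le> sqrt h + 3/4 * sqrt t"
    using assms(1,4) by (intro add_nonneg_nonneg mult_nonneg_nonneg real_sqrt_ge_zero) auto
  ultimately show ?thesis by (rule power2_le_imp_le)
qed

lemma alg2:
  fixes Q n \<rho> \<alpha> :: real assumes "n \<noteq> 0" "\<alpha> \<noteq> 0"
  shows "Q * (1/n + 1/n^2 + 8 * \<rho> / (n*\<alpha>)) / (2*n) = Q / (2*n^2) + Q / (2*n^3) + 4 * Q * \<rho> / (n^2*\<alpha>)"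
  using assms by (simp add: field_simps power2_eq_square power3_eq_cube)
lemma alg3:
  fixes a b c :: real
  shows "a * b / c + a * b / c + 8 * a * b / c = 10 * a * b / c"
  by (simp add: field_simps)

lemma Fd_bound:
  fixes \<alpha> h L T K \<tau> :: real
  assumes a0: "0 < \<alpha>" and a1: "\<alpha> \<le> 1" and h: "0 < h" and L0: "0 < L"
    and HL: "L^2 > 19*pi^2*\<alpha>^2 + 2*h" and hL: "h \<le> 2*\<alpha>*L"
    and t1: "\<bar>\<tau>\<bar> \<le> 1" and t2: "\<bar>\<tau>\<bar> \<le> 4*\<alpha>*pi*L" and K0: "0 \<le> K" and K1: "K \<le> 1"
  shows "norm (of_real K * (Gd \<alpha> T L (csqrt (Complex h \<tau>)) * inverse (2 * csqrt (Complex h \<tau>))))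
          \<le> 10 * exp (h+4) * exp (-T) / h^2"
proof -
  define s where "s = csqrt (Complex h \<tau>)"
  define X where "X = Re s"
  define n where "n = norm s"
  define w where "w = (s - of_real L) / of_real \<alpha>"
  define E where "E = exp w"
  define N where "N = norm (1 + E)"
  define Q where "Q = exp (X - T)"
  define \<rho> where "\<rho> = exp (- \<bar>Re w\<bar>)"
  have X0: "X > 0" and X2: "2 * X^2 \<le> 2*h + \<bar>\<tau>\<bar>" and n2: "h \<le> n^2"
    using csqrt_facts(1,4,6)[OF h, of \<tau>] unfolding s_def[symmetric] X_def[symmetric] n_def[symmetric] by auto
  have "n \<noteq> 0" using n2 h by (auto simp: power2_eq_square)
  then have n0: "0 < n" unfolding n_def by simp
  have nh: "sqrt h \<le> n" using s_lower[OF h n2] n0 by simp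
  have N2: "N \<ge> 1/2" using geo[OF a0 h L0 HL t2] unfolding N_def E_def w_def s_def .
  have Rw: "Re w = (X - L)/\<alpha>" unfolding w_def X_def by simp
  have Er: "norm E / N^2 \<le> 16 * \<rho>" using E_ratio[of w] N2 unfolding N_def E_def \<rho>_def by simp
  have Xb: "X \<le> sqrt h + 1"
  proof -
    have "X \<le> sqrt h + 3/4 * sqrt \<bar>\<tau>\<bar>" using X_upper[OF h _ X2] X0 by simp
    moreover have "sqrt \<bar>\<tau>\<bar> \<le> 1" using t1 by simp
    ultimately show ?thesis by linarith
  qed
  have RB: "h * exp X \<le> exp (h+4)" "sqrt h * exp X \<le> exp (h+4)" "exp (2*X) \<le> exp (h+4)"
    using real_bounds[OF h _ Xb] X0 by auto
  have R4': "L * exp (X - \<bar>X - L\<bar> / \<alpha>) \<le> exp (2*X)" using R4[OF a0 a1 L0] X0 by simp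
  have Q: "norm (exp (s - of_real T)) = Q" unfolding Q_def X_def by simp
  have GdE: "Gd \<alpha> T L s = exp (s - of_real T) * (1 / (2 * s * (1 + E)) - 1 / (2 * s^2 * (1 + E))
             - E / (2 * s * of_real \<alpha> * (1 + E)^2))"
    unfolding Gd_def E_def w_def ..
  have nA: "norm (1 / (2 * s * (1 + E))) = 1 / (2*n*N)"
    unfolding n_def N_def by (simp add: norm_mult norm_divide)
  have nB: "norm (1 / (2 * s^2 * (1 + E))) = 1 / (2*n^2*N)"
    unfolding n_def N_def by (simp add: norm_mult norm_divide norm_power)
  have nC: "norm (E / (2 * s * of_real \<alpha> * (1 + E)^2)) = norm E / (2*n*\<alpha>*N^2)"
    unfolding n_def N_def using a0 by (simp add: norm_mult norm_divide norm_power)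
  have tri: "norm (Gd \<alpha> T L s) \<le> Q * (1 / (2*n*N) + 1 / (2*n^2*N) + norm E / (2*n*\<alpha>*N^2))"
  proof -
    have "norm (Gd \<alpha> T L s) = Q * norm (1 / (2 * s * (1 + E)) - 1 / (2 * s^2 * (1 + E))
             - E / (2 * s * of_real \<alpha> * (1 + E)^2))" unfolding GdE norm_mult Q ..
    also have "\<dots> \<le> Q * (1 / (2*n*N) + 1 / (2*n^2*N) + norm E / (2*n*\<alpha>*N^2))"
    proof (rule mult_left_mono)
      have i1: "norm (1 / (2 * s * (1 + E)) - 1 / (2 * s^2 * (1 + E)) - E / (2 * s * of_real \<alpha> * (1 + E)^2))
        \<le> norm (1 / (2 * s * (1 + E)) - 1 / (2 * s^2 * (1 + E))) + norm (E / (2 * s * of_real \<alpha> * (1 + E)^2))"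
        by (rule norm_triangle_ineq4)
      have i2: "norm (1 / (2 * s * (1 + E)) - 1 / (2 * s^2 * (1 + E)))
        \<le> norm (1 / (2 * s * (1 + E))) + norm (1 / (2 * s^2 * (1 + E)))"
        by (rule norm_triangle_ineq4)
      show "norm (1 / (2 * s * (1 + E)) - 1 / (2 * s^2 * (1 + E)) - E / (2 * s * of_real \<alpha> * (1 + E)^2))
        \<le> 1 / (2*n*N) + 1 / (2*n^2*N) + norm E / (2*n*\<alpha>*N^2)"
        using i1 i2 unfolding nA nB nC by linarith
    qed (simp add: Q_def)
    finally show ?thesis .
  qed
  have Npos: "0 < N" using N2 by simp
  have b1: "1 / (2*n*N) \<le> 1/n" using n0 N2 by (simp add: field_simps)
  have b2: "1 / (2*n^2*N) \<le> 1/n^2" using n0 N2 by (simp add: field_simps)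
  have b3: "norm E / (2*n*\<alpha>*N^2) \<le> 8 * \<rho> / (n*\<alpha>)"
  proof -
    have "norm E / (2*n*\<alpha>*N^2) = (norm E / N^2) / (2*n*\<alpha>)" using Npos by (simp add: field_simps)
    also have "\<dots> \<le> (16 * \<rho>) / (2*n*\<alpha>)" using Er n0 a0 by (intro divide_right_mono) auto
    also have "\<dots> = 8 * \<rho> / (n*\<alpha>)" by simp
    finally show ?thesis .
  qed
  have Q0: "0 < Q" unfolding Q_def by simp
  have "1 / (2*n*N) + 1 / (2*n^2*N) + norm E / (2*n*\<alpha>*N^2) \<le> 1/n + 1/n^2 + 8 * \<rho> / (n*\<alpha>)"
    using b1 b2 b3 by linarith
  then have "Q * (1 / (2*n*N) + 1 / (2*n^2*N) + norm E / (2*n*\<alpha>*N^2)) \<le> Q * (1/n + 1/n^2 + 8 * \<rho> / (n*\<alpha>))"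
    using Q0 by (intro mult_left_mono) auto
  then have tri2: "norm (Gd \<alpha> T L s) \<le> Q * (1/n + 1/n^2 + 8 * \<rho> / (n*\<alpha>))"
    using tri by linarith
  have ni: "norm (inverse (2 * s)) = inverse (2*n)" unfolding n_def by (simp add: norm_inverse norm_mult)
  have nK: "norm (of_real K :: complex) = K" using K0 by simp
  have "norm (of_real K * (Gd \<alpha> T L s * inverse (2 * s))) = K * (norm (Gd \<alpha> T L s) * inverse (2*n))"
    by (simp only: norm_mult ni nK)
  also have "\<dots> = K * (norm (Gd \<alpha> T L s) / (2*n))" by (simp only: divide_inverse)
  also have "\<dots> \<le> norm (Gd \<alpha> T L s) / (2*n)"
  proof (rule mult_left_le_one_le)
    show "0 \<le> norm (Gd \<alpha> T L s) / (2*n)" using n0 by simp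
  qed (use K0 K1 in auto)
  also have "\<dots> \<le> Q * (1/n + 1/n^2 + 8 * \<rho> / (n*\<alpha>)) / (2*n)"
  proof (rule divide_right_mono)
    show "0 \<le> 2*n" using n0 by simp
  qed (rule tri2)
  also have "\<dots> = Q / (2*n^2) + Q / (2*n^3) + 4 * Q * \<rho> / (n^2*\<alpha>)"
    using n0 a0 by (intro alg2) auto
  also have "\<dots> \<le> exp (h+4) * exp (-T) / h^2 + exp (h+4) * exp (-T) / h^2 + 8 * exp (h+4) * exp (-T) / h^2"
  proof (intro add_mono)
    have "Q / (2*n^2) \<le> Q / h" using n2 h Q0 by (simp add: frac_le)
    also have "Q / h = (h * exp X) * exp (-T) / h^2" unfolding Q_def using h
      by (simp add: exp_diff exp_minus power2_eq_square field_simps)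
    also have "\<dots> \<le> exp (h+4) * exp (-T) / h^2" using RB(1) h by (intro divide_right_mono mult_right_mono) auto
    finally show "Q / (2*n^2) \<le> exp (h+4) * exp (-T) / h^2" .
  next
    have n3: "h * sqrt h \<le> n^3"
    proof -
      have "h * sqrt h \<le> n^2 * n" using n2 nh h by (intro mult_mono) auto
      then show ?thesis by (simp add: power2_eq_square power3_eq_cube)
    qed
    have hs: "0 < h * sqrt h" using h by simp
    have "Q / (2*n^3) \<le> Q / (h * sqrt h)" using n3 hs Q0 by (simp add: frac_le)
    also have "Q / (h * sqrt h) = (sqrt h * exp X) * exp (-T) / h^2" unfolding Q_def using h
      by (simp add: exp_diff exp_minus power2_eq_square field_simps)
    also have "\<dots> \<le> exp (h+4) * exp (-T) / h^2" using RB(2) h by (intro divide_right_mono mult_right_mono) auto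
    finally show "Q / (2*n^3) \<le> exp (h+4) * exp (-T) / h^2" .
  next
    have r0: "0 \<le> 4 * Q * \<rho>" unfolding \<rho>_def using Q0 by simp
    have "4 * Q * \<rho> / (n^2*\<alpha>) \<le> 4 * Q * \<rho> / (h*\<alpha>)"
      using r0 n2 h a0 n0 by (intro divide_left_mono mult_right_mono) (auto intro!: mult_pos_pos)
    also have "\<dots> = 4 * (h / \<alpha>) * exp (X - \<bar>X - L\<bar> / \<alpha>) * exp (-T) / h^2"
    proof -
      have ab: "\<bar>Re w\<bar> = \<bar>X - L\<bar> / \<alpha>" unfolding Rw using a0 by (simp add: abs_divide)
      have qr: "Q * \<rho> = exp (X - \<bar>X - L\<bar> / \<alpha>) * exp (-T)"
        unfolding Q_def \<rho>_def ab by (simp only: mult_exp_exp) (simp add: algebra_simps)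
      define P where "P = exp (X - \<bar>X - L\<bar> / \<alpha>) * exp (-T)"
      have "4 * Q * \<rho> / (h*\<alpha>) = 4 * P / (h*\<alpha>)" unfolding P_def qr[symmetric] by (simp add: mult.assoc)
      also have "\<dots> = 4 * (h / \<alpha>) * P / h^2" using h a0 by (simp add: field_simps power2_eq_square)
      finally show ?thesis unfolding P_def by (simp add: mult.assoc)
    qed
    also have "\<dots> \<le> 4 * (2 * L) * exp (X - \<bar>X - L\<bar> / \<alpha>) * exp (-T) / h^2"
      using hL a0 h by (intro divide_right_mono mult_right_mono mult_left_mono) (auto simp: field_simps)
    also have "\<dots> = 8 * (L * exp (X - \<bar>X - L\<bar> / \<alpha>)) * exp (-T) / h^2" by simp
    also have "\<dots> \<le> 8 * exp (h+4) * exp (-T) / h^2"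
    proof -
      have "L * exp (X - \<bar>X - L\<bar> / \<alpha>) \<le> exp (h+4)" using R4' RB(3) by linarith
      then show ?thesis using h by (intro divide_right_mono mult_right_mono mult_left_mono) auto
    qed
    finally show "4 * Q * \<rho> / (n^2*\<alpha>) \<le> 8 * exp (h+4) * exp (-T) / h^2" .
  qed
  also have "\<dots> = 10 * exp (h+4) * exp (-T) / h^2" by (rule alg3)
  finally have fin: "norm (of_real K * (Gd \<alpha> T L s * inverse (2 * s))) \<le> 10 * exp (h+4) * exp (-T) / h^2" .
  show ?thesis using fin by (simp only: s_def)
qed

lemma F_deriv:
  assumes u: "0 < Re u" and E: "1 + exp ((csqrt u - of_real L) / of_real \<alpha>) \<noteq> 0" and a: "\<alpha> \<noteq> 0"
  shows "((\<lambda>u. of_real K * Gc \<alpha> T L (csqrt u)) has_field_derivative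
           (of_real K * (Gd \<alpha> T L (csqrt u) * inverse (2 * csqrt u)))) (at u)"
proof -
  have u0: "u \<noteq> 0" using u by auto
  have s0: "csqrt u \<noteq> 0" using u0 by simp
  have nr: "u \<notin> \<real>\<^sub>\<le>\<^sub>0" using u by (auto simp: complex_nonpos_Reals_iff)
  have "((\<lambda>u. Gc \<alpha> T L (csqrt u)) has_field_derivative (Gd \<alpha> T L (csqrt u) * inverse (2 * csqrt u))) (at u)"
    by (rule DERIV_chain2[OF Gc_deriv[OF s0 E a] has_field_derivative_csqrt[OF nr]])
  then show ?thesis by (rule DERIV_cmult)
qed

lemma seg_mem:
  fixes h t :: real
  assumes "z \<in> closed_segment (Complex h (-t)) (Complex h t)" "0 \<le> t"
  shows "z = Complex h (Im z)" "\<bar>Im z\<bar> \<le> t"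
proof -
  obtain v where v: "0 \<le> v" "v \<le> 1" "z = (1 - v) *\<^sub>R Complex h (-t) + v *\<^sub>R Complex h t"
    using assms(1) unfolding in_segment by blast
  have "Re z = (1 - v) * h + v * h" unfolding v(3) by simp
  then have Re: "Re z = h" by (simp add: algebra_simps)
  have "Im z = (1 - v) * (- t) + v * t" unfolding v(3) by simp
  then have Im: "Im z = (2 * v - 1) * t" by (simp add: algebra_simps)
  show "z = Complex h (Im z)" using Re by (simp add: complex_eq_iff)
  have "\<bar>2 * v - 1\<bar> \<le> 1" using v by auto
  then have "\<bar>2 * v - 1\<bar> * t \<le> 1 * t" using assms(2) by (intro mult_right_mono) auto
  then show "\<bar>Im z\<bar> \<le> t" unfolding Im using assms(2) by (simp add: abs_mult)
qed

lemma F_bound: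
  fixes \<alpha> h L T K \<tau> :: real
  assumes a0: "0 < \<alpha>" and h: "0 < h" and L0: "0 < L"
    and HL: "L^2 > 19*pi^2*\<alpha>^2 + 2*h" and t2: "\<bar>\<tau>\<bar> \<le> 4*\<alpha>*pi*L" and t0: "0 < \<bar>\<tau>\<bar>"
    and K0: "0 \<le> K" and K1: "K \<le> 1"
  shows "norm (of_real K * Gc \<alpha> T L (csqrt (Complex h \<tau>)))
          \<le> 4 * exp (-T) * (exp (sqrt h) / sqrt h) * (exp (sqrt \<bar>\<tau>\<bar>) / sqrt \<bar>\<tau>\<bar>)"
proof -
  define s where "s = csqrt (Complex h \<tau>)"
  define X where "X = Re s"
  define n where "n = norm s"
  define N where "N = norm (1 + exp ((s - of_real L) / of_real \<alpha>))"
  define t where "t = \<bar>\<tau>\<bar>"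
  have X0: "X > 0" and X2: "2 * X^2 \<le> 2*h + \<bar>\<tau>\<bar>" and n2: "h \<le> n^2"
    using csqrt_facts(1,4,6)[OF h, of \<tau>] unfolding s_def[symmetric] X_def[symmetric] n_def[symmetric] by auto
  have "n \<noteq> 0" using n2 h by (auto simp: power2_eq_square)
  then have n0: "0 < n" unfolding n_def by simp
  have nh: "sqrt h \<le> n" using s_lower[OF h n2] n0 by simp
  have N2: "N \<ge> 1/2" using geo[OF a0 h L0 HL t2] unfolding N_def s_def .
  have Xu: "X \<le> sqrt h + 3/4 * sqrt t" using X_upper[OF h _ X2] X0 unfolding t_def by simp
  have t0': "0 < t" using t0 unfolding t_def .
  have nG: "norm (Gc \<alpha> T L s) = exp (X - T) / (2 * n * N)"
    unfolding Gc_def n_def N_def X_def by (simp add: norm_mult norm_divide)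
  have "norm (of_real K * Gc \<alpha> T L s) = K * (exp (X - T) / (2 * n * N))"
    using K0 by (simp add: norm_mult nG)
  also have "\<dots> \<le> exp (X - T) / n"
  proof -
    have "K * (exp (X - T) / (2 * n * N)) \<le> exp (X - T) / (2 * n * N)"
      using K0 K1 n0 N2 by (intro mult_left_le_one_le) auto
    also have "\<dots> \<le> exp (X - T) / n"
      using n0 N2 by (intro divide_left_mono) auto
    finally show ?thesis .
  qed
  also have "\<dots> \<le> 4 * exp (-T) * (exp (sqrt h) / sqrt h) * (exp (sqrt t) / sqrt t)"
  proof -
    have st: "sqrt t \<le> 4 * exp (sqrt t / 4)" using x_le_exp[of "sqrt t / 4"] by simp
    have sh0: "0 < sqrt h" "0 < sqrt t" using h t0' by auto
    have "exp X * sqrt h * sqrt t \<le> exp (sqrt h + 3/4 * sqrt t) * n * (4 * exp (sqrt t / 4))"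
      using Xu nh st sh0 n0 by (intro mult_mono) auto
    also have "\<dots> = 4 * n * exp (sqrt h + sqrt t)"
      by (simp add: mult_exp_exp[symmetric] algebra_simps) (simp add: mult_exp_exp)
    finally have key: "exp X * sqrt h * sqrt t \<le> 4 * n * exp (sqrt h + sqrt t)" .
    have "exp (X - T) / n = exp X * exp (-T) / n" by (simp add: exp_diff exp_minus divide_inverse)
    also have "\<dots> \<le> 4 * exp (-T) * (exp (sqrt h) / sqrt h) * (exp (sqrt t) / sqrt t)"
      using key n0 sh0 by (simp add: field_simps exp_add)
    finally show ?thesis .
  qed
  finally show ?thesis unfolding s_def t_def .
qed

lemma core:
  fixes \<alpha> h L T K c :: real and F :: "complex \<Rightarrow> complex"
  assumes a0: "0 < \<alpha>" and a1: "\<alpha> \<le> 1" and h: "0 < h" and L0: "0 < L"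
    and HL: "L^2 > 19*pi^2*\<alpha>^2 + 2*h" and hL: "h \<le> 2*\<alpha>*L"
    and K0: "0 \<le> K" and K1: "K \<le> 1" and c: "0 < c"
    and F: "\<And>u. F u = of_real K * Gc \<alpha> T L (csqrt u)"
  shows "norm (integral {0..2*(2*\<alpha>*pi*L)}
            (\<lambda>t. (F (Complex h t) - F (Complex h (-t))) * complex_of_real (exp (- c * t))))
         \<le> 20 * exp 4 * ((exp h / h^2) * integral {0..1} (\<lambda>t. t * exp (- c * t))
              + (exp (sqrt h) / sqrt h) * integral {1..} (\<lambda>t. exp (sqrt t) / sqrt t * exp (- c * t)))
            * exp (- T)"
proof -
  define A where "A = 2*(2*\<alpha>*pi*L)"
  have A4: "A = 4*\<alpha>*pi*L" unfolding A_def by simp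
  have A0: "0 < A" unfolding A4 using a0 L0 by simp
  define \<Phi> where "\<Phi> = (\<lambda>t. (F (Complex h t) - F (Complex h (-t))) * complex_of_real (exp (- c * t)))"
  define F' where "F' = (\<lambda>u. of_real K * (Gd \<alpha> T L (csqrt u) * inverse (2 * csqrt u)))"
  define B where "B = 10 * exp (h+4) * exp (-T) / h^2"
  define K2 where "K2 = 8 * exp (-T) * (exp (sqrt h) / sqrt h)"
  define I1 where "I1 = integral {0..1} (\<lambda>t. t * exp (- c * t))"
  define I2 where "I2 = integral {1..} (\<lambda>t. exp (sqrt t) / sqrt t * exp (- c * t))"
  define G1 where "G1 = (\<lambda>t. 2 * B * (t * exp (- c * t)))"
  define G2 where "G2 = (\<lambda>t. K2 * (exp (sqrt t) / sqrt t * exp (- c * t)))"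
  have Feq: "F = (\<lambda>u. of_real K * Gc \<alpha> T L (csqrt u))" using F by (simp add: fun_eq_iff)
  have good: "norm (1 + exp ((csqrt (Complex h \<tau>) - of_real L) / of_real \<alpha>)) \<ge> 1/2"
    if "\<bar>\<tau>\<bar> \<le> A" for \<tau>
    using geo[OF a0 h L0 HL] that unfolding A4 by simp
  have Fder: "(F has_field_derivative F' (Complex h \<tau>)) (at (Complex h \<tau>))" if "\<bar>\<tau>\<bar> \<le> A" for \<tau>
  proof -
    have "1 + exp ((csqrt (Complex h \<tau>) - of_real L) / of_real \<alpha>) \<noteq> 0"
      using good[OF that] by auto
    then show ?thesis unfolding Feq F'_def using h a0 by (intro F_deriv) auto
  qed
  have Fcont: "isCont F (Complex h \<tau>)" if "\<bar>\<tau>\<bar> \<le> A" for \<tau>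
    using Fder[OF that] by (rule DERIV_isCont)
  have Ceq: "(\<lambda>t. Complex h t) = (\<lambda>t. of_real h + \<i> * of_real t)" by (simp add: fun_eq_iff complex_eq_iff)
  have Ceq2: "(\<lambda>t. Complex h (-t)) = (\<lambda>t. of_real h - \<i> * of_real t)" by (simp add: fun_eq_iff complex_eq_iff)
  have contPhi: "continuous_on {0..A} \<Phi>"
  proof (rule continuous_at_imp_continuous_on, rule ballI)
    fix t assume t: "t \<in> {0..A}"
    then have ta: "\<bar>t\<bar> \<le> A" "\<bar>-t\<bar> \<le> A" by auto
    have i1: "isCont (\<lambda>t. Complex h t) t" unfolding Ceq by (intro continuous_intros)
    have i2: "isCont (\<lambda>t. Complex h (-t)) t" unfolding Ceq2 by (intro continuous_intros)
    have c1: "isCont (\<lambda>t. F (Complex h t)) t"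
      using isCont_o2[where f="\<lambda>t. Complex h t" and g=F and a=t] i1 Fcont[OF ta(1)] by simp
    have c2: "isCont (\<lambda>t. F (Complex h (-t))) t"
      using isCont_o2[where f="\<lambda>t. Complex h (-t)" and g=F and a=t] i2 Fcont[OF ta(2)] by simp
    show "isCont \<Phi> t" unfolding \<Phi>_def using c1 c2 by (intro continuous_intros)
  qed
  have intPhi: "\<Phi> integrable_on {0..A}" using contPhi by (rule integrable_continuous_interval)
  have Bpos: "0 \<le> B" unfolding B_def using h by simp
  have lip: "norm (F (Complex h t) - F (Complex h (-t))) \<le> B * (2*t)"
    if t0: "0 \<le> t" and t1: "t \<le> 1" and tA: "t \<le> A" for t
  proof -
    define S where "S = closed_segment (Complex h (-t)) (Complex h t)"
    have "norm (F (Complex h t) - F (Complex h (-t))) \<le> B * norm (Complex h t - Complex h (-t))"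
    proof (rule field_differentiable_bound[of S F F' B])
      show "convex S" unfolding S_def by (rule convex_closed_segment)
      show "Complex h t \<in> S" "Complex h (-t) \<in> S" unfolding S_def by auto
    next
      fix z assume z: "z \<in> S"
      have zz: "z = Complex h (Im z)" and zi: "\<bar>Im z\<bar> \<le> t" using seg_mem[OF z[unfolded S_def] t0] by auto
      have "(F has_field_derivative F' (Complex h (Im z))) (at (Complex h (Im z)))"
        using Fder[of "Im z"] zi tA by simp
      then show "(F has_field_derivative F' z) (at z within S)"
        using zz by (metis has_field_derivative_at_within)
      have "norm (F' (Complex h (Im z))) \<le> B"
        unfolding F'_def B_def
        by (rule Fd_bound[OF a0 a1 h L0 HL hL _ _ K0 K1]) (use zi t1 tA A4 in auto)
      then show "norm (F' z) \<le> B" using zz by metis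
    qed
    also have "norm (Complex h t - Complex h (-t)) = 2*t"
    proof -
      have "Complex h t - Complex h (-t) = Complex 0 (2*t)" by (simp add: complex_eq_iff)
      moreover have "sqrt (4 * t^2) = 2*t" using real_sqrt_abs[of "2*t"] t0 by (simp add: power_mult_distrib)
      ultimately show ?thesis by (simp add: cmod_def)
    qed
    finally show ?thesis .
  qed
  have big: "norm (F (Complex h t) - F (Complex h (-t))) \<le> K2 * (exp (sqrt t) / sqrt t)"
    if t1: "1 \<le> t" and tA: "t \<le> A" for t
  proof -
    have b1: "norm (F (Complex h t)) \<le> 4 * exp (-T) * (exp (sqrt h) / sqrt h) * (exp (sqrt \<bar>t\<bar>) / sqrt \<bar>t\<bar>)"
      unfolding Feq by (rule F_bound[OF a0 h L0 HL _ _ K0 K1]) (use t1 tA A4 in auto)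
    have b2: "norm (F (Complex h (-t))) \<le> 4 * exp (-T) * (exp (sqrt h) / sqrt h) * (exp (sqrt \<bar>-t\<bar>) / sqrt \<bar>-t\<bar>)"
      unfolding Feq by (rule F_bound[OF a0 h L0 HL _ _ K0 K1]) (use t1 tA A4 in auto)
    have "norm (F (Complex h t) - F (Complex h (-t))) \<le> norm (F (Complex h t)) + norm (F (Complex h (-t)))"
      by (rule norm_triangle_ineq4)
    also have "\<dots> \<le> K2 * (exp (sqrt t) / sqrt t)" using b1 b2 t1 unfolding K2_def by simp
    finally show ?thesis .
  qed
  have nPhi: "norm (\<Phi> t) = norm (F (Complex h t) - F (Complex h (-t))) * exp (- c * t)" for t
    unfolding \<Phi>_def by (simp add: norm_mult)
  have P1: "norm (\<Phi> t) \<le> G1 t" if "t \<in> {0..A}" "t \<le> 1" for t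
  proof -
    have "norm (\<Phi> t) \<le> B * (2*t) * exp (- c * t)" unfolding nPhi
      using lip[of t] that by (intro mult_right_mono) auto
    then show ?thesis unfolding G1_def by (simp add: algebra_simps)
  qed
  have P2: "norm (\<Phi> t) \<le> G2 t" if "t \<in> {1..A}" for t
  proof -
    have "norm (\<Phi> t) \<le> K2 * (exp (sqrt t) / sqrt t) * exp (- c * t)" unfolding nPhi
      using big[of t] that by (intro mult_right_mono) auto
    then show ?thesis unfolding G2_def by (simp add: algebra_simps)
  qed
  have contG1: "continuous_on S G1" for S unfolding G1_def by (intro continuous_intros)
  have intG1: "G1 integrable_on {a..b}" for a b by (rule integrable_continuous_interval[OF contG1])
  have G1nn: "0 \<le> G1 t" if "0 \<le> t" for t unfolding G1_def using Bpos that by simp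
  have intI1: "(\<lambda>t. t * exp (- c * t)) integrable_on {0..1}"
    by (rule integrable_continuous_interval) (intro continuous_intros)
  have I1nn: "0 \<le> I1" unfolding I1_def by (rule integral_nonneg[OF intI1]) auto
  have intI2: "(\<lambda>t. exp (sqrt t) / sqrt t * exp (- c * t)) integrable_on {1..}" by (rule G2_int[OF c])
  have I2nn: "0 \<le> I2" unfolding I2_def by (rule integral_nonneg[OF intI2]) auto
  have intG2: "G2 integrable_on {1..}" unfolding G2_def using integrable_on_cmult_left[OF intI2, of K2] by simp
  have K2nn: "0 \<le> K2" unfolding K2_def using h by simp
  have G2nn: "0 \<le> G2 t" if "1 \<le> t" for t unfolding G2_def using K2nn that by simp
  have intG1_1: "integral {0..1} G1 = 2 * B * I1" unfolding G1_def I1_def by simp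
  have intG2_1: "integral {1..} G2 = K2 * I2" unfolding G2_def I2_def by (rule integral_mult_right)
  have main: "norm (integral {0..A} \<Phi>) \<le> 2 * B * I1 + K2 * I2"
  proof (cases "A \<le> 1")
    case True
    have "norm (integral {0..A} \<Phi>) \<le> integral {0..A} G1"
      by (rule integral_norm_bound_integral[OF intPhi intG1]) (use P1 True in auto)
    also have "\<dots> \<le> integral {0..1} G1"
      by (rule integral_subset_le[OF _ intG1 intG1]) (use True G1nn in auto)
    also have "\<dots> \<le> 2 * B * I1 + K2 * I2" unfolding intG1_1 using K2nn I2nn by simp
    finally show ?thesis .
  next
    case False
    have i01: "\<Phi> integrable_on {0..1}" by (rule integrable_on_subinterval[OF intPhi]) (use False in auto)
    have i1A: "\<Phi> integrable_on {1..A}" by (rule integrable_on_subinterval[OF intPhi]) (use False in auto)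
    have "integral {0..A} \<Phi> = integral {0..1} \<Phi> + integral {1..A} \<Phi>"
      by (rule Henstock_Kurzweil_Integration.integral_combine[symmetric]) (use False intPhi in auto)
    then have "norm (integral {0..A} \<Phi>) \<le> norm (integral {0..1} \<Phi>) + norm (integral {1..A} \<Phi>)"
      by (simp add: norm_triangle_ineq)
    also have "norm (integral {0..1} \<Phi>) \<le> integral {0..1} G1"
      by (rule integral_norm_bound_integral[OF i01 intG1]) (use P1 False in auto)
    also have "norm (integral {1..A} \<Phi>) \<le> integral {1..A} G2"
    proof (rule integral_norm_bound_integral[OF i1A])
      show "G2 integrable_on {1..A}" by (rule integrable_on_subinterval[OF intG2]) auto
    qed (use P2 in auto)
    also have "integral {1..A} G2 \<le> integral {1..} G2"
      by (rule integral_subset_le[OF _ integrable_on_subinterval[OF intG2] intG2]) (use G2nn in auto)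
    finally show ?thesis unfolding intG1_1 intG2_1 by simp
  qed
  have fin: "2 * B * I1 + K2 * I2 \<le> 20 * exp 4 * ((exp h / h^2) * I1 + (exp (sqrt h) / sqrt h) * I2) * exp (- T)"
  proof -
    have e1: "2 * B * I1 = 20 * exp 4 * ((exp h / h^2) * I1) * exp (-T)"
      unfolding B_def by (simp add: exp_add field_simps)
    have e4: "8 \<le> 20 * exp (4::real)" using exp_ge_add_one_self[of 4] by simp
    have "K2 * I2 = 8 * ((exp (sqrt h) / sqrt h) * I2 * exp (-T))" unfolding K2_def by simp
    also have "\<dots> \<le> 20 * exp 4 * ((exp (sqrt h) / sqrt h) * I2 * exp (-T))"
      using e4 I2nn h by (intro mult_right_mono) auto
    finally have e2: "K2 * I2 \<le> 20 * exp 4 * ((exp (sqrt h) / sqrt h) * I2) * exp (-T)" by simp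
    show ?thesis using e1 e2 by (simp add: algebra_simps)
  qed
  show ?thesis using main fin unfolding A_def \<Phi>_def I1_def I2_def by simp
qed

lemma rhs_nonneg:
  fixes h c T :: real assumes h: "0 < h" and c: "0 < c"
  shows "0 \<le> 20 * exp 4 * ((exp h / h^2) * integral {0..1} (\<lambda>t. t * exp (- c * t))
              + (exp (sqrt h) / sqrt h) * integral {1..} (\<lambda>t. exp (sqrt t) / sqrt t * exp (- c * t)))
            * exp (- T)"
proof -
  have intI1: "(\<lambda>t. t * exp (- c * t)) integrable_on {0..1}"
    by (rule integrable_continuous_interval) (intro continuous_intros)
  have I1: "0 \<le> integral {0..1} (\<lambda>t. t * exp (- c * t))" by (rule integral_nonneg[OF intI1]) auto
  have I2: "0 \<le> integral {1..} (\<lambda>t. exp (sqrt t) / sqrt t * exp (- c * t))"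
    by (rule integral_nonneg[OF G2_int[OF c]]) auto
  show ?thesis using I1 I2 h by simp
qed

theorem lemmaA1:
  shows "\<exists>C::real. \<forall>(\<alpha>::real) (\<sigma>::real) (N1::nat) (n::nat) (x::real).
     0 < \<alpha> \<longrightarrow> \<alpha> < 1 \<longrightarrow> 0 < \<sigma> \<longrightarrow> 1 \<le> N1 \<longrightarrow> 1 \<le> n \<longrightarrow>
     x \<in> UpsA \<alpha> \<sigma> N1 \<longrightarrow>
     (let h = hA \<alpha> \<sigma>; T = TA \<alpha> \<sigma> N1; a = 2 * \<alpha> * pi * (T + \<alpha> * ln x) in
       cmod (integral {0..2*a}
               (\<lambda>t. (fA \<alpha> T (Complex h t) x - fA \<alpha> T (Complex h (-t)) x)
                     * complex_of_real (exp (- (2 * real n * pi / h) * t))))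
       \<le> C * ((exp h / h\<^sup>2) * integral {0..1} (\<lambda>t. t * exp (- (2 * real n * pi / h) * t))
              + (exp (sqrt h) / sqrt h) *
                integral {1..} (\<lambda>t. exp (sqrt t) / sqrt t * exp (- (2 * real n * pi / h) * t)))
           * exp (- T))"
proof (rule exI[of _ "20 * exp 4"], intro allI impI)
  fix \<alpha> \<sigma> :: real and N1 n :: nat and x :: real
  assume a0: "0 < \<alpha>" and a1: "\<alpha> < 1" and s0: "0 < \<sigma>" and N1: "1 \<le> N1" and n1: "1 \<le> n"
    and xU: "x \<in> UpsA \<alpha> \<sigma> N1"
  define h where "h = hA \<alpha> \<sigma>"
  define T where "T = TA \<alpha> \<sigma> N1"
  define L where "L = T + \<alpha> * ln x"
  define c where "c = 2 * real n * pi / h"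
  define K where "K = sin (\<alpha> * pi) / (\<alpha> * pi)"
  have hsa: "h = \<sigma>^2 * \<alpha>^2" unfolding h_def hA_def ..
  have h: "0 < h" unfolding hsa using a0 s0 by simp
  have c: "0 < c" unfolding c_def using h n1 by simp
  have xs: "xstarA \<alpha> T \<le> x" and x1: "x \<le> 1"
    and U: "(T + \<alpha> * ln x)^2 - \<alpha>^2 * pi^2 > M0A \<sigma> * h"
    using xU unfolding UpsA_def T_def h_def by auto
  have x0: "0 < x" using xs unfolding xstarA_def by (meson exp_gt_zero less_le_trans)
  have ce: "9*pi^2/\<sigma>^2 \<le> real_of_int (ceiling (9*pi^2/\<sigma>^2))" by (rule le_of_int_ceiling)
  define mA where "mA = \<sigma>^2/4"
  define mB where "mB = 1 + real_of_int (ceiling (9*pi^2/\<sigma>^2))"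
  define mD where "mD = 2 * real_of_int (ceiling ((1 + sqrt (pi / \<sigma>)) ^ 4))"
  have M0e: "M0A \<sigma> = 2 * max (max mA mB) mD" unfolding M0A_def mA_def mB_def mD_def ..
  have "mB \<le> max (max mA mB) mD" "mA \<le> max (max mA mB) mD" by auto
  then have Mb: "2 * mB \<le> M0A \<sigma>" "2 * mA \<le> M0A \<sigma>" unfolding M0e by auto
  define q where "q = 9*pi^2/\<sigma>^2"
  have e18: "18*pi^2/\<sigma>^2 = 2*q" unfolding q_def by simp
  have "2 * (1 + real_of_int (ceiling q)) \<le> M0A \<sigma>" "q \<le> real_of_int (ceiling q)"
    using Mb(1) ce unfolding mB_def q_def by auto
  moreover have aux: "\<And>r M. 2*(1+r) \<le> M \<Longrightarrow> q \<le> r \<Longrightarrow> 2 + 2*q \<le> (M::real)" by (smt (verit))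
  ultimately have M1: "M0A \<sigma> \<ge> 2 + 18*pi^2/\<sigma>^2" unfolding e18 by blast
  have M2: "M0A \<sigma> \<ge> \<sigma>^2/2" using Mb(2) unfolding mA_def by simp
  have UL: "L^2 > \<alpha>^2 * pi^2 + M0A \<sigma> * h" using U unfolding L_def by simp
  have HL: "L^2 > 19*pi^2*\<alpha>^2 + 2*h"
  proof -
    have "(2 + 18*pi^2/\<sigma>^2) * h \<le> M0A \<sigma> * h" using M1 h by (intro mult_right_mono) auto
    moreover have "(2 + 18*pi^2/\<sigma>^2) * h = 2*h + 18*pi^2*\<alpha>^2" unfolding hsa using s0
      by (simp add: field_simps)
    ultimately have f1: "2*h + 18*(pi^2*\<alpha>^2) \<le> M0A \<sigma> * h" by (simp add: algebra_simps)
    have f2: "(pi^2*\<alpha>^2) + M0A \<sigma> * h < L^2" using UL by (simp add: mult.commute)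
    have "19*(pi^2*\<alpha>^2) + 2*h < L^2" using f1 f2 by linarith
    then show ?thesis by (simp add: mult.assoc)
  qed
  have K0: "0 \<le> K" unfolding K_def using a0 a1 by (intro divide_nonneg_pos sin_ge_zero) auto
  have K1: "K \<le> 1" unfolding K_def using a0 by (simp add: divide_le_eq sin_x_le_x)
  have F: "\<And>u. fA \<alpha> T u x = of_real K * Gc \<alpha> T L (csqrt u)"
    unfolding K_def L_def using fA_eq[OF x0] a0 by simp
  have goal: "cmod (integral {0..2*(2*\<alpha>*pi*L)}
            (\<lambda>t. (fA \<alpha> T (Complex h t) x - fA \<alpha> T (Complex h (-t)) x) * complex_of_real (exp (- c * t))))
         \<le> 20 * exp 4 * ((exp h / h^2) * integral {0..1} (\<lambda>t. t * exp (- c * t))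
              + (exp (sqrt h) / sqrt h) * integral {1..} (\<lambda>t. exp (sqrt t) / sqrt t * exp (- c * t)))
            * exp (- T)"
  proof (cases "0 < L")
    case L0: True
    have hL: "h \<le> 2*\<alpha>*L"
    proof -
      have "(\<sigma>^2/2) * h \<le> M0A \<sigma> * h" using M2 h by (intro mult_right_mono) auto
      then have "L^2 > (\<sigma>^2/2) * h" using UL by (smt (verit) zero_le_power2 mult_nonneg_nonneg)
      then have "\<alpha>^2 * L^2 > \<alpha>^2 * ((\<sigma>^2/2) * h)" using a0 by simp
      moreover have "\<alpha>^2 * ((\<sigma>^2/2) * h) = h^2 / 2" unfolding hsa by (simp add: power2_eq_square)
      ultimately have "h^2 < 2 * (\<alpha> * L)^2" by (simp add: power_mult_distrib)
      also have "\<dots> \<le> (2*\<alpha>*L)^2" by (simp add: power_mult_distrib)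
      finally have "h^2 < (2*\<alpha>*L)^2" .
      then show ?thesis using a0 L0 power_less_imp_less_base[of h 2 "2*\<alpha>*L"] by simp
    qed
    show ?thesis
      by (rule core[OF a0 _ h L0 HL hL K0 K1 c F]) (use a1 in simp)
  next
    case False
    have p0: "0 \<le> 19*pi^2*\<alpha>^2" by simp
    have "L \<noteq> 0"
    proof
      assume "L = 0"
      then have "19*pi^2*\<alpha>^2 + 2*h < 0" using HL by simp
      then show False using p0 h by linarith
    qed
    then have "L < 0" using False by simp
    then have "2*(2*\<alpha>*pi*L) < 0" using a0 by (simp add: mult_pos_neg)
    then have "{0..2*(2*\<alpha>*pi*L)} = {}" by simp
    then show ?thesis using rhs_nonneg[OF h c] by simp
  qed
  show "let h = hA \<alpha> \<sigma>; T = TA \<alpha> \<sigma> N1; a = 2 * \<alpha> * pi * (T + \<alpha> * ln x) in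
       cmod (integral {0..2*a}
               (\<lambda>t. (fA \<alpha> T (Complex h t) x - fA \<alpha> T (Complex h (-t)) x)
                     * complex_of_real (exp (- (2 * real n * pi / h) * t))))
       \<le> 20 * exp 4 * ((exp h / h\<^sup>2) * integral {0..1} (\<lambda>t. t * exp (- (2 * real n * pi / h) * t))
              + (exp (sqrt h) / sqrt h) *
                integral {1..} (\<lambda>t. exp (sqrt t) / sqrt t * exp (- (2 * real n * pi / h) * t)))
           * exp (- T)"
    unfolding Let_def h_def[symmetric] T_def[symmetric] L_def[symmetric] c_def[symmetric]
    using goal .
qed


end
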